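(* Let $a,b,c,d,e,f$ be positive reals such that $\mathrm{Anth}(a,b)$, $\mathrm{Anth}(e,f)$, $\mathrm{Anth}(b,c)$, $\mathrm{Anth}(d,e)$, $\mathrm{Anth}(a,c)$, $\mathrm{Anth}(d,f)$ are all finite or eventually periodic, with $\mathrm{Anth}(a,b)=\mathrm{Anth}(e,f)$ and $\mathrm{Anth}(b,c)=\mathrm{Anth}(d,e)$. Then $\mathrm{Anth}(a,c)=\mathrm{Anth}(d,f)$.
   Context: For positive reals $a,b$, the anthyphairesis of $a$ to $b$ is the Euclidean subtraction algorithm: set $e_{-1}=a$, $e_0=b$, and for $i\ge 0$, as long as $e_i>0$, write $e_{i-1}=k_i e_i+e_{i+1}$ with $k_i$ a nonnegative integer and $0\le e_{i+1}<e_i$; the process stops if some remainder is $0$. $\mathrm{Anth}(a,b)=[k_0,k_1,\dots]$ is the sequence of quotients; it is finite if the process stops, and eventually periodic if it is infinite and there exist $N\ge0$, $p\ge1$ with $k_{i+p}=k_i$ for all $i\ge N$. *)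

theory Defs
  imports Complex_Main
begin

text \<open>Remainders of the anthyphairesis of a to b, shifted by one:
  anth_rem a b 0 = e_{-1} = a, anth_rem a b 1 = e_0 = b,
  anth_rem a b (n+2) = e_{n+1} = e_{n-1} - k_n e_n (once a remainder is 0, all later ones are 0).\<close>
fun anth_rem :: "real \<Rightarrow> real \<Rightarrow> nat \<Rightarrow> real" where
  "anth_rem a b 0 = a"
| "anth_rem a b (Suc 0) = b"
| "anth_rem a b (Suc (Suc n)) =
     (if anth_rem a b (Suc n) > 0
      then anth_rem a b n - of_int \<lfloor>anth_rem a b n / anth_rem a b (Suc n)\<rfloor> * anth_rem a b (Suc n)
      else 0)"

definition anth :: "real \<Rightarrow> real \<Rightarrow> nat \<Rightarrow> nat option" where
  "anth a b i = (if anth_rem a b (Suc i) > 0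
                 then Some (nat \<lfloor>anth_rem a b i / anth_rem a b (Suc i)\<rfloor>)
                 else None)"

definition anth_finite :: "real \<Rightarrow> real \<Rightarrow> bool" where
  "anth_finite a b \<longleftrightarrow> (\<exists>N. \<forall>i\<ge>N. anth a b i = None)"

definition anth_eventually_periodic :: "real \<Rightarrow> real \<Rightarrow> bool" where
  "anth_eventually_periodic a b \<longleftrightarrow>
     (\<forall>i. anth a b i \<noteq> None) \<and>
     (\<exists>N p. p \<ge> 1 \<and> (\<forall>i\<ge>N. anth a b (i + p) = anth a b i))"

end

theory Submission
  imports Defs
begin

lemma rem_nonneg: "a > 0 \<Longrightarrow> b > 0 \<Longrightarrow> anth_rem a b n \<ge> 0"
proof (induction a b n rule: anth_rem.induct)
  case (3 a b n)
  have "\<And>x y::real. y > 0 \<Longrightarrow> x - of_int \<lfloor>x / y\<rfloor> * y \<ge> 0"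
  proof -
    fix x y :: real assume y: "y > 0"
    have "of_int \<lfloor>x / y\<rfloor> \<le> x / y" by simp
    hence "of_int \<lfloor>x / y\<rfloor> * y \<le> x / y * y" by (rule mult_right_mono) (use y in simp)
    also have "x / y * y = x" using y by simp
    finally show "x - of_int \<lfloor>x / y\<rfloor> * y \<ge> 0" by simp
  qed
  thus ?case by simp
qed auto

lemma modlt: "(y::real) > 0 \<Longrightarrow> x - of_int \<lfloor>x / y\<rfloor> * y < y"
proof -
  assume y: "y > 0"
  have "x / y < of_int \<lfloor>x / y\<rfloor> + 1" by linarith
  hence "x / y * y < (of_int \<lfloor>x / y\<rfloor> + 1) * y" using y by (simp only: mult_strict_right_mono)
  also have "x / y * y = x" using y by simp
  finally show ?thesis by (simp add: algebra_simps)
qed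

lemma rem_zero_prop: "\<not> anth_rem a b (Suc n) > 0 \<Longrightarrow> anth_rem a b (Suc (Suc n)) = 0"
  by simp

lemma rem_dec: "a > 0 \<Longrightarrow> b > 0 \<Longrightarrow> anth_rem a b (Suc (Suc n)) \<le> anth_rem a b (Suc n)"
  using modlt[of "anth_rem a b (Suc n)" "anth_rem a b n"] rem_nonneg[of a b "Suc n"] by auto

lemma rem_half: assumes "a > 0" "b > 0"
  shows "anth_rem a b (Suc (Suc (Suc n))) \<le> anth_rem a b (Suc n) / 2"
proof (cases "anth_rem a b (Suc (Suc n)) > 0")
  case False thus ?thesis using rem_nonneg[OF assms, of "Suc n"] by simp
next
  case True
  define x where "x = anth_rem a b (Suc n)"
  define y where "y = anth_rem a b (Suc (Suc n))"
  have yx: "y \<le> x" using rem_dec[OF assms] unfolding x_def y_def by simp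
  have y: "y > 0" using True y_def by simp
  have q: "\<lfloor>x / y\<rfloor> \<ge> 1" using yx y by (simp add: le_divide_eq)
  have r: "anth_rem a b (Suc (Suc (Suc n))) = x - of_int \<lfloor>x / y\<rfloor> * y"
    using True unfolding x_def y_def by simp
  have "of_int \<lfloor>x / y\<rfloor> * y \<ge> y" using q y
  proof -
    have "(1::real) \<le> of_int \<lfloor>x / y\<rfloor>" using q by simp
    thus ?thesis using y mult_right_mono[of 1 "of_int \<lfloor>x / y\<rfloor>" y] by simp
  qed
  hence "x - of_int \<lfloor>x / y\<rfloor> * y \<le> x - y" by simp
  moreover have "x - of_int \<lfloor>x / y\<rfloor> * y < y" using modlt[OF y] .
  ultimately show ?thesis using r x_def by simp
qed

lemma rem_scale: assumes t: "t > 0"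
  shows "anth_rem (t*a) (t*b) n = t * anth_rem a b n \<and> anth_rem (t*a) (t*b) (Suc n) = t * anth_rem a b (Suc n)"
proof (induction n)
  case (Suc n)
  have e: "t * anth_rem a b n / (t * anth_rem a b (Suc n)) = anth_rem a b n / anth_rem a b (Suc n)"
    using t by simp
  have "anth_rem (t*a) (t*b) (Suc (Suc n)) = t * anth_rem a b (Suc (Suc n))"
    using Suc t by (simp add: e zero_less_mult_iff algebra_simps)
  thus ?case using Suc by simp
qed simp

lemma anth_scale: "t > 0 \<Longrightarrow> anth (t*a) (t*b) = anth a b"
proof
  fix i assume t: "t > 0"
  have e: "t * anth_rem a b i / (t * anth_rem a b (Suc i)) = anth_rem a b i / anth_rem a b (Suc i)"
    using t by simp
  show "anth (t*a) (t*b) i = anth a b i"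
    unfolding anth_def using rem_scale[OF t, of a b i] using t by (simp add: e zero_less_mult_iff)
qed

lemma arch4: "(c::real) > 0 \<Longrightarrow> \<forall>n. z \<le> c / 4^n \<Longrightarrow> z \<le> 0"
proof (rule ccontr)
  assume c: "c > 0" and h: "\<forall>n. z \<le> c / 4^n" and z: "\<not> z \<le> 0"
  obtain n where n: "c / z < 4^n" using real_arch_pow[of 4 "c/z"] by auto
  hence "c < 4^n * z" using z by (simp add: divide_less_eq mult.commute)
  moreover have "z * 4^n \<le> c" using h[rule_format, of n] by (simp add: le_divide_eq)
  ultimately show False by (simp add: mult.commute)
qed

lemma anth_ratio:
  assumes pos: "a > 0" "b > 0" "e > 0" "f > 0" and eq: "anth a b = anth e f"
  shows "a * f = b * e"
proof -
  define R where "R = anth_rem a b"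
  define S where "S = anth_rem e f"
  define D where "D n = R n * S (Suc n) - R (Suc n) * S n" for n
  have Rnn: "\<And>n. R n \<ge> 0" unfolding R_def using rem_nonneg pos by auto
  have Snn: "\<And>n. S n \<ge> 0" unfolding S_def using rem_nonneg pos by auto
  have posiff: "\<And>i. R (Suc i) > 0 \<longleftrightarrow> S (Suc i) > 0"
  proof -
    fix i from fun_cong[OF eq, of i] show "R (Suc i) > 0 \<longleftrightarrow> S (Suc i) > 0"
      unfolding anth_def R_def S_def by (auto split: if_splits)
  qed
  have flr: "\<And>i. R (Suc i) > 0 \<Longrightarrow> \<lfloor>R i / R (Suc i)\<rfloor> = \<lfloor>S i / S (Suc i)\<rfloor>"
  proof -
    fix i assume h: "R (Suc i) > 0"
    hence h2: "S (Suc i) > 0" using posiff by simp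
    from fun_cong[OF eq, of i] h h2
    have "nat \<lfloor>R i / R (Suc i)\<rfloor> = nat \<lfloor>S i / S (Suc i)\<rfloor>"
      unfolding anth_def R_def S_def by simp
    moreover have "\<lfloor>R i / R (Suc i)\<rfloor> \<ge> 0" using Rnn[of i] h by simp
    moreover have "\<lfloor>S i / S (Suc i)\<rfloor> \<ge> 0" using Snn[of i] h2 by simp
    ultimately show "\<lfloor>R i / R (Suc i)\<rfloor> = \<lfloor>S i / S (Suc i)\<rfloor>" by (metis nat_eq_iff2)
  qed
  have step: "\<And>n. R (Suc n) > 0 \<Longrightarrow> D (Suc n) = - D n"
  proof -
    fix n assume h: "R (Suc n) > 0"
    hence h2: "S (Suc n) > 0" using posiff by simp
    define k where "k = \<lfloor>R n / R (Suc n)\<rfloor>"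
    have r: "R (Suc (Suc n)) = R n - of_int k * R (Suc n)" using h unfolding R_def k_def by simp
    have s: "S (Suc (Suc n)) = S n - of_int k * S (Suc n)" using h2 flr[OF h] unfolding S_def k_def R_def by simp
    show "D (Suc n) = - D n" unfolding D_def r s by (simp add: algebra_simps)
  qed
  have inv: "\<And>n. R (Suc n) > 0 \<longrightarrow> \<bar>D n\<bar> = \<bar>D 0\<bar>"
  proof -
    fix n show "R (Suc n) > 0 \<longrightarrow> \<bar>D n\<bar> = \<bar>D 0\<bar>"
    proof (induction n)
      case (Suc n)
      show ?case
      proof
        assume h: "R (Suc (Suc n)) > 0"
        hence "R (Suc n) > 0" unfolding R_def using rem_zero_prop by fastforce
        thus "\<bar>D (Suc n)\<bar> = \<bar>D 0\<bar>" using Suc step by simp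
      qed
    qed simp
  qed
  have D0: "D 0 = a * f - b * e" unfolding D_def R_def S_def by simp
  have termin: "\<And>n. \<not> R (Suc n) > 0 \<Longrightarrow> D 0 = 0"
  proof -
    fix n show "\<not> R (Suc n) > 0 \<Longrightarrow> D 0 = 0"
    proof (induction n)
      case 0 thus ?case using pos unfolding R_def by simp
    next
      case (Suc n)
      show ?case
      proof (cases "R (Suc n) > 0")
        case False thus ?thesis using Suc by simp
      next
        case True
        have z1: "R (Suc (Suc n)) = 0" using Suc.prems Rnn[of "Suc (Suc n)"] by simp
        have z2: "S (Suc (Suc n)) = 0" using Suc.prems posiff[of "Suc n"] Snn[of "Suc (Suc n)"] by simp
        have "D (Suc n) = 0" unfolding D_def z1 z2 by simp
        thus ?thesis using step[OF True] inv[of n] True by simp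
      qed
    qed
  qed
  show ?thesis
  proof (cases "\<forall>n. R (Suc n) > 0")
    case False thus ?thesis using termin D0 by auto
  next
    case True
    have Rh: "\<And>n. R (Suc (Suc (Suc n))) \<le> R (Suc n) / 2" unfolding R_def using rem_half pos by auto
    have Sh: "\<And>n. S (Suc (Suc (Suc n))) \<le> S (Suc n) / 2" unfolding S_def using rem_half pos by auto
    have R2: "R 2 \<le> b" using rem_dec[of a b 0] pos unfolding R_def by (simp add: numeral_2_eq_2)
    have S2: "S 2 \<le> f" using rem_dec[of e f 0] pos unfolding S_def by (simp add: numeral_2_eq_2)
    have Ro: "\<And>n. R (2*n+1) \<le> b / 2^n"
    proof -
      fix n show "R (2*n+1) \<le> b / 2^n"
      proof (induction n)
        case 0 thus ?case unfolding R_def by simp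
      next
        case (Suc n)
        have "R (2*Suc n+1) = R (Suc (Suc (Suc (2*n))))" by simp
        also have "\<dots> \<le> R (2*n+1) / 2" using Rh[of "2*n"] by simp
        also have "\<dots> \<le> b / 2^Suc n" using Suc by simp
        finally show ?case .
      qed
    qed
    have Re: "\<And>n. R (2*n+2) \<le> b / 2^n"
    proof -
      fix n show "R (2*n+2) \<le> b / 2^n"
      proof (induction n)
        case 0 thus ?case using R2 by (simp add: numeral_2_eq_2)
      next
        case (Suc n)
        have "R (2*Suc n+2) = R (Suc (Suc (Suc (2*n+1))))" by simp
        also have "\<dots> \<le> R (2*n+2) / 2" using Rh[of "2*n+1"] by (simp add: numeral_2_eq_2)
        also have "\<dots> \<le> b / 2^Suc n" using Suc by simp
        finally show ?case .
      qed
    qed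
    have So: "\<And>n. S (2*n+1) \<le> f / 2^n"
    proof -
      fix n show "S (2*n+1) \<le> f / 2^n"
      proof (induction n)
        case 0 thus ?case unfolding S_def by simp
      next
        case (Suc n)
        have "S (2*Suc n+1) = S (Suc (Suc (Suc (2*n))))" by simp
        also have "\<dots> \<le> S (2*n+1) / 2" using Sh[of "2*n"] by simp
        also have "\<dots> \<le> f / 2^Suc n" using Suc by simp
        finally show ?case .
      qed
    qed
    have Se: "\<And>n. S (2*n+2) \<le> f / 2^n"
    proof -
      fix n show "S (2*n+2) \<le> f / 2^n"
      proof (induction n)
        case 0 thus ?case using S2 by (simp add: numeral_2_eq_2)
      next
        case (Suc n)
        have "S (2*Suc n+2) = S (Suc (Suc (Suc (2*n+1))))" by simp
        also have "\<dots> \<le> S (2*n+2) / 2" using Sh[of "2*n+1"] by (simp add: numeral_2_eq_2)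
        also have "\<dots> \<le> f / 2^Suc n" using Suc by simp
        finally show ?case .
      qed
    qed
    have bnd: "\<forall>n. \<bar>D 0\<bar> \<le> (2*b*f) / 4^n"
    proof
      fix n
      have "\<bar>D 0\<bar> = \<bar>D (2*n+1)\<bar>" using inv[of "2*n+1"] True by simp
      also have "\<dots> \<le> R (2*n+1) * S (2*n+2) + R (2*n+2) * S (2*n+1)"
        unfolding D_def using Rnn Snn
        by (simp add: abs_le_iff add_nonneg_nonneg mult_nonneg_nonneg add.commute)
      also have "\<dots> \<le> (b/2^n) * (f/2^n) + (b/2^n) * (f/2^n)"
        using Ro[of n] Re[of n] So[of n] Se[of n] Rnn Snn pos
        by (intro add_mono mult_mono) auto
      also have "\<dots> = (2*b*f) / 4^n"
        by (simp add: power_mult_distrib[symmetric] field_simps)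
      finally show "\<bar>D 0\<bar> \<le> (2*b*f) / 4^n" .
    qed
    have "\<bar>D 0\<bar> \<le> 0" using arch4[OF _ bnd] pos by simp
    thus ?thesis using D0 by simp
  qed
qed

theorem proposition10p2p8:
  fixes a b c d e f :: real
  assumes pos: "a > 0" "b > 0" "c > 0" "d > 0" "e > 0" "f > 0"
    and fp: "anth_finite a b \<or> anth_eventually_periodic a b"
            "anth_finite e f \<or> anth_eventually_periodic e f"
            "anth_finite b c \<or> anth_eventually_periodic b c"
            "anth_finite d e \<or> anth_eventually_periodic d e"
            "anth_finite a c \<or> anth_eventually_periodic a c"
            "anth_finite d f \<or> anth_eventually_periodic d f"
    and eq1: "anth a b = anth e f"
    and eq2: "anth b c = anth d e"
  shows "anth a c = anth d f"
proof -
  have 1: "a * f = b * e" using anth_ratio[OF pos(1,2,5,6) eq1] .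
  have 2: "b * e = c * d" using anth_ratio[OF pos(2,3,4,5) eq2] .
  define t where "t = f / c"
  have t: "t > 0" using pos by (simp add: t_def)
  have "d = t * a" using 1 2 pos unfolding t_def by (simp add: field_simps)
  moreover have "f = t * c" using pos unfolding t_def by simp
  ultimately show ?thesis using anth_scale[OF t, of a c] by simp
qed

end
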